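(* Let $x\in\mathbb R^d$ and $q\in\mathcal C$ be such that the segment $\overline{xq}$ does not intersect the medial axis $\mathcal M$, and let $p=\mathrm{cl}(x)$. Then $p$ and $q$ lie in the same connected component of $\mathcal C$, and for a fixed orientation of that component, the interior of $B_x(d(x,q))$ contains either $[p,q)$ or $(q,p]$.
   Context: $\mathcal C\subset\mathbb R^d$ ($d\ge2$) is a finite union of pairwise disjoint closed curves (images of injective continuous maps $S^1\to\mathbb R^d$). $d(x,y)$ is Euclidean distance, $B_x(r)$ the closed ball of radius $r$ about $x$, $\overline{xy}$ the closed segment. The medial axis $\mathcal M$ is the set of points with no unique closest point in $\mathcal C$; $\mathrm{cl}(x)$ is the unique closest point of $\mathcal C$ to $x\notin\mathcal M$. For $p,q$ in the same component with a fixed orientation, $[p,q]$ is $\{p\}$ if $p=q$ and otherwise the arc of $\mathcal C$ from $p$ to $q$ traversed following the orientation; $[p,q)$, $(q,p]$ etc. denote the corresponding arcs with the indicated endpoints removed. *)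

theory Defs
  imports "HOL-Analysis.Analysis"
begin

definition is_closest :: "'a::metric_space set \<Rightarrow> 'a \<Rightarrow> 'a \<Rightarrow> bool" where
  "is_closest C y c \<longleftrightarrow> c \<in> C \<and> (\<forall>c'\<in>C. dist y c \<le> dist y c')"

definition medial_axis :: "'a::metric_space set \<Rightarrow> 'a set" where
  "medial_axis C = {y. \<not> (\<exists>!c. is_closest C y c)}"

definition cl :: "'a::metric_space set \<Rightarrow> 'a \<Rightarrow> 'a" where
  "cl C y = (THE c. is_closest C y c)"

text \<open>A simple closed curve: image of an injective continuous map from the circle,
  represented as a simple loop \<open>g : [0,1] \<rightarrow> R^d\<close> with \<open>g 0 = g 1\<close>.
  The parametrisation fixes the orientation.\<close>

definition simple_loop :: "(real \<Rightarrow> 'a::topological_space) \<Rightarrow> bool" where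
  "simple_loop g \<longleftrightarrow> simple_path g \<and> pathfinish g = pathstart g"

definition loop_param :: "(real \<Rightarrow> 'a) \<Rightarrow> 'a \<Rightarrow> real" where
  "loop_param g p = (THE s. s \<in> {0..<1} \<and> g s = p)"

text \<open>The closed arc \<open>[p,q]\<close> traversed following the orientation of \<open>g\<close>;
  equals \<open>{p}\<close> when \<open>p = q\<close>.\<close>
definition closed_arc :: "(real \<Rightarrow> 'a) \<Rightarrow> 'a \<Rightarrow> 'a \<Rightarrow> 'a set" where
  "closed_arc g p q =
     (let s = loop_param g p; t = loop_param g q in
      if s \<le> t then g ` {s..t} else g ` ({s..1} \<union> {0..t}))"

definition arc_co :: "(real \<Rightarrow> 'a) \<Rightarrow> 'a \<Rightarrow> 'a \<Rightarrow> 'a set" where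
  "arc_co g p q = closed_arc g p q - {q}"

definition arc_oc :: "(real \<Rightarrow> 'a) \<Rightarrow> 'a \<Rightarrow> 'a \<Rightarrow> 'a set" where
  "arc_oc g p q = closed_arc g p q - {p}"

end

theory Submission
  imports Defs
begin

lemma lf_eq:
  assumes "simple_loop g" "u \<in> {0..<1}" "w \<in> {0..<1}" "g u = g w"
  shows "u = w"
  using assms unfolding simple_loop_def simple_path_def loop_free_def by force

lemma lp_of:
  assumes "simple_loop g" "w \<in> {0..<1}"
  shows "loop_param g (g w) = w"
  unfolding loop_param_def
  by (rule the_equality) (use assms lf_eq in auto)

lemma lp_of1:
  assumes "simple_loop g"
  shows "loop_param g (g 1) = 0"
proof -
  have "g 1 = g 0" using assms unfolding simple_loop_def pathfinish_def pathstart_def by simp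
  thus ?thesis using lp_of[OF assms, of 0] by simp
qed

lemma lp_img:
  assumes "simple_loop g" "y \<in> path_image g"
  shows "loop_param g y \<in> {0..<1} \<and> g (loop_param g y) = y"
proof -
  obtain w where w: "w \<in> {0..1}" "y = g w" using assms(2) unfolding path_image_def by auto
  show ?thesis
  proof (cases "w = 1")
    case True
    thus ?thesis using w lp_of1[OF assms(1)] assms(1)
      unfolding simple_loop_def pathfinish_def pathstart_def by simp
  next
    case False
    hence "w \<in> {0..<1}" using w by auto
    thus ?thesis using w lp_of[OF assms(1)] by simp
  qed
qed

lemma separation:
  fixes g :: "real \<Rightarrow> 'a::euclidean_space"
  assumes g: "simple_loop g" and K: "K \<subseteq> path_image g" "connected K"
    and uv: "0 \<le> u" "u < v" "v < 1" and nK: "g u \<notin> K" "g v \<notin> K"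
    and w1: "w1 \<in> {0..<1}" "g w1 \<in> K" and w2: "w2 \<in> {0..<1}" "g w2 \<in> K"
    and in1: "w1 \<in> {u<..<v}" and out2: "w2 \<notin> {u<..<v}"
  shows False
proof -
  have pg: "path g" using g unfolding simple_loop_def simple_path_def by simp
  have lf: "loop_free g" using g unfolding simple_loop_def simple_path_def by simp
  define F1 where "F1 = g ` {u..v}"
  define F2 where "F2 = g ` ({v..1} \<union> {0..u})"
  have c1: "closed F1" unfolding F1_def
    by (rule compact_imp_closed, rule compact_continuous_image)
       (use pg uv in \<open>auto simp: path_def intro: continuous_on_subset\<close>)
  have c2: "closed F2" unfolding F2_def
    by (rule compact_imp_closed, rule compact_continuous_image)
       (use pg uv in \<open>auto simp: path_def intro: continuous_on_subset\<close>)
  have cov: "K \<subseteq> F1 \<union> F2"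
  proof
    fix y assume "y \<in> K"
    then obtain w where "w \<in> {0..1}" "y = g w" using K unfolding path_image_def by auto
    thus "y \<in> F1 \<union> F2" unfolding F1_def F2_def
      by (cases "w \<le> u \<or> v \<le> w") auto
  qed
  have dis: "F1 \<inter> F2 \<inter> K = {}"
  proof (rule ccontr)
    assume "F1 \<inter> F2 \<inter> K \<noteq> {}"
    then obtain y a b where y: "y \<in> K" "a \<in> {u..v}" "y = g a" "b \<in> {v..1} \<union> {0..u}" "y = g b"
      unfolding F1_def F2_def by blast
    have ab: "a \<in> {0..1}" "b \<in> {0..1}" using y uv by auto
    have "a = b \<or> a = 0 \<and> b = 1 \<or> a = 1 \<and> b = 0"
      using lf ab y(3,5) unfolding loop_free_def by blast
    then have "a = u \<or> a = v" using y uv by auto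
    thus False using y nK by auto
  qed
  have "g w1 \<in> F1" using in1 unfolding F1_def by auto
  moreover have "g w2 \<in> F2" using w2 out2 unfolding F2_def by auto
  ultimately show False using connected_closedD[OF K(2) _ cov c1 c2] dis w1 w2 by blast
qed

lemma arc_param:
  fixes g :: "real \<Rightarrow> 'a::euclidean_space"
  assumes g: "simple_loop g" and pq: "p \<in> path_image g" "q \<in> path_image g"
    and y: "y \<in> closed_arc g p q"
  shows "(loop_param g p \<le> loop_param g q \<longrightarrow>
            loop_param g p \<le> loop_param g y \<and> loop_param g y \<le> loop_param g q) \<and>
         (loop_param g q < loop_param g p \<longrightarrow>
            loop_param g p \<le> loop_param g y \<or> loop_param g y \<le> loop_param g q)"
proof -
  define s where "s = loop_param g p"
  define t where "t = loop_param g q"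
  have st: "s \<in> {0..<1}" "t \<in> {0..<1}" using lp_img[OF g pq(1)] lp_img[OF g pq(2)]
    unfolding s_def t_def by auto
  show ?thesis
  proof (cases "s \<le> t")
    case True
    then obtain w where w: "w \<in> {s..t}" "y = g w"
      using y unfolding closed_arc_def Let_def s_def t_def by auto
    hence "loop_param g y = w" using st lp_of[OF g, of w] by auto
    then show ?thesis using w \<open>s \<le> t\<close> unfolding s_def t_def by auto
  next
    case False
    have "y \<in> g ` ({s..1} \<union> {0..t})"
      using y False unfolding closed_arc_def Let_def s_def t_def by simp
    then obtain w where w: "w \<in> {s..1} \<union> {0..t}" "y = g w" by blast
    show ?thesis
    proof (cases "w < 1")
      case True
      hence "loop_param g y = w" using w st lp_of[OF g, of w] by auto
      then show ?thesis using w False unfolding s_def t_def by auto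
    next
      case False
      hence "w = 1" using w st by auto
      hence "loop_param g y = 0" using w lp_of1[OF g] by simp
      then show ?thesis using st \<open>\<not> s \<le> t\<close> unfolding s_def t_def by auto
    qed
  qed
qed

lemma arc_sub:
  fixes g :: "real \<Rightarrow> 'a::euclidean_space"
  assumes g: "simple_loop g" and pq: "p \<in> path_image g" "q \<in> path_image g"
  shows "closed_arc g p q \<subseteq> path_image g"
proof -
  have st: "loop_param g p \<in> {0..<1}" "loop_param g q \<in> {0..<1}"
    using lp_img[OF g pq(1)] lp_img[OF g pq(2)] by auto
  have h: "{loop_param g p..loop_param g q} \<subseteq> {0..1}" 
       "{loop_param g p..1} \<union> {0..loop_param g q} \<subseteq> {0..1}" using st by auto
  show ?thesis unfolding closed_arc_def Let_def path_image_def
    using image_mono[OF h(1), of g] image_mono[OF h(2), of g] by simp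
qed

lemma arc_in:
  fixes g :: "real \<Rightarrow> 'a::euclidean_space"
  assumes g: "simple_loop g" and K: "K \<subseteq> path_image g" "connected K"
    and pq: "p \<in> K" "q \<in> K"
  shows "closed_arc g p q \<subseteq> K \<or> closed_arc g q p \<subseteq> K"
proof (rule ccontr)
  assume "\<not> ?thesis"
  then obtain a b where a: "a \<in> closed_arc g p q" "a \<notin> K" and b: "b \<in> closed_arc g q p" "b \<notin> K"
    by auto
  have pqi: "p \<in> path_image g" "q \<in> path_image g" using pq K by auto
  define s where "s = loop_param g p"
  define t where "t = loop_param g q"
  define \<alpha> where "\<alpha> = loop_param g a"
  define \<beta> where "\<beta> = loop_param g b"
  have A: "(s \<le> t \<longrightarrow> s \<le> \<alpha> \<and> \<alpha> \<le> t) \<and> (t < s \<longrightarrow> s \<le> \<alpha> \<or> \<alpha> \<le> t)"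
    using arc_param[OF g pqi a(1)] unfolding s_def t_def \<alpha>_def .
  have B: "(t \<le> s \<longrightarrow> t \<le> \<beta> \<and> \<beta> \<le> s) \<and> (s < t \<longrightarrow> t \<le> \<beta> \<or> \<beta> \<le> s)"
    using arc_param[OF g pqi(2,1) b(1)] unfolding s_def t_def \<beta>_def .
  have ps: "s \<in> {0..<1}" "g s = p" using lp_img[OF g pqi(1)] s_def by auto
  have qt: "t \<in> {0..<1}" "g t = q" using lp_img[OF g pqi(2)] t_def by auto
  have ai: "a \<in> path_image g" using arc_sub[OF g pqi] a by auto
  have bi: "b \<in> path_image g" using arc_sub[OF g pqi(2,1)] b by auto
  have aa: "\<alpha> \<in> {0..<1}" "g \<alpha> = a" using lp_img[OF g ai] \<alpha>_def by auto
  have bb: "\<beta> \<in> {0..<1}" "g \<beta> = b" using lp_img[OF g bi] \<beta>_def by auto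
  have ne: "\<alpha> \<noteq> s" "\<alpha> \<noteq> t" "\<beta> \<noteq> s" "\<beta> \<noteq> t"
    using aa bb ps qt a b pq by metis+
  have sep: "(s \<in> {u<..<v}) = (t \<in> {u<..<v})"
    if "u \<in> {0..<1}" "v \<in> {0..<1}" "u < v" "g u \<notin> K" "g v \<notin> K" for u v
  proof (rule ccontr)
    assume "(s \<in> {u<..<v}) \<noteq> (t \<in> {u<..<v})"
    then consider "s \<in> {u<..<v}" "t \<notin> {u<..<v}" | "t \<in> {u<..<v}" "s \<notin> {u<..<v}" by blast
    thus False
    proof cases
      case 1 show False
        by (rule separation[OF g K, of u v s t]) (use that 1 ps qt pq in auto)
    next
      case 2 show False
        by (rule separation[OF g K, of u v t s]) (use that 2 ps qt pq in auto)
    qed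
  qed
  have "\<alpha> \<noteq> \<beta>" using aa bb a b A B ne by auto
  then consider "\<alpha> < \<beta>" | "\<beta> < \<alpha>" by linarith
  thus False
  proof cases
    case 1
    have "(s \<in> {\<alpha><..<\<beta>}) = (t \<in> {\<alpha><..<\<beta>})" using sep[OF aa(1) bb(1) 1] aa bb a b by auto
    thus False using A B ne 1 by auto
  next
    case 2
    have "(s \<in> {\<beta><..<\<alpha>}) = (t \<in> {\<beta><..<\<alpha>})" using sep[OF bb(1) aa(1) 2] aa bb a b by auto
    thus False using A B ne 2 by auto
  qed
qed

theorem lemma3p3:
  fixes \<Gamma> :: "(real \<Rightarrow> 'a::euclidean_space) set"
    and C :: "'a set" and x q :: 'a
  assumes dim: "DIM('a) \<ge> 2"
    and fin: "finite \<Gamma>"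
    and loops: "\<And>g. g \<in> \<Gamma> \<Longrightarrow> simple_loop g"
    and disj: "\<And>g h. g \<in> \<Gamma> \<Longrightarrow> h \<in> \<Gamma> \<Longrightarrow> g \<noteq> h \<Longrightarrow>
                  path_image g \<inter> path_image h = {}"
    and C_def: "C = (\<Union>g\<in>\<Gamma>. path_image g)"
    and qC: "q \<in> C"
    and seg: "closed_segment x q \<inter> medial_axis C = {}"
  shows "connected_component C (cl C x) q \<and>
         (\<forall>g. simple_loop g \<and> path_image g = connected_component_set C (cl C x) \<longrightarrow>
              arc_co g (cl C x) q \<subseteq> interior (cball x (dist x q)) \<or>
              arc_oc g q (cl C x) \<subseteq> interior (cball x (dist x q)))"
proof -
  let ?S = "closed_segment x q"
  define p where "p = cl C x"
  have compC: "compact C" unfolding C_def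
    using fin loops by (intro compact_UN ballI compact_path_image) (auto simp: simple_loop_def simple_path_def)
  have uniq: "\<exists>!c. is_closest C y c" if "y \<in> ?S" for y
    using seg that unfolding medial_axis_def by blast
  have clp: "is_closest C y (cl C y)" if "y \<in> ?S" for y
    unfolding cl_def using theI'[OF uniq[OF that]] .
  have clu: "c = cl C y" if "y \<in> ?S" "is_closest C y c" for y c
    using uniq[OF that(1)] clp[OF that(1)] that(2) by blast
  have clC: "cl C y \<in> C" if "y \<in> ?S" for y using clp[OF that] unfolding is_closest_def by simp
  have graph: "(\<lambda>y. (y, cl C y)) ` ?S = (?S \<times> UNIV) \<inter>
      ((UNIV \<times> C) \<inter> (\<Inter>c'\<in>C. {z. dist (fst z) (snd z) \<le> dist (fst z) c'}))"
  proof (intro equalityI subsetI)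
    fix z assume "z \<in> (\<lambda>y. (y, cl C y)) ` ?S"
    then obtain y where "y \<in> ?S" "z = (y, cl C y)" by blast
    thus "z \<in> (?S \<times> UNIV) \<inter> ((UNIV \<times> C) \<inter> (\<Inter>c'\<in>C. {z. dist (fst z) (snd z) \<le> dist (fst z) c'}))"
      using clp[of y] unfolding is_closest_def by auto
  next
    fix z assume z: "z \<in> (?S \<times> UNIV) \<inter> ((UNIV \<times> C) \<inter> (\<Inter>c'\<in>C. {z. dist (fst z) (snd z) \<le> dist (fst z) c'}))"
    obtain y c where yc: "z = (y, c)" by fastforce
    have "y \<in> ?S" "is_closest C y c" using z unfolding yc is_closest_def by auto
    hence "c = cl C y" by (rule clu)
    thus "z \<in> (\<lambda>y. (y, cl C y)) ` ?S" using \<open>y \<in> ?S\<close> yc by blast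
  qed
  have "closed ((\<lambda>y. (y, cl C y)) ` ?S)"
    unfolding graph
    by (intro closed_Int closed_Times closed_INT ballI closed_Collect_le compact_imp_closed compC
          continuous_intros closed_segment closed_UNIV) 
  moreover have "cl C \<in> ?S \<rightarrow> C" using clC by auto
  ultimately have contcl: "continuous_on ?S (cl C)"
    using continuous_from_closed_graph[OF compC] by blast
  define K where "K = cl C ` ?S"
  have Kc: "connected K" unfolding K_def
    by (rule connected_continuous_image[OF contcl connected_segment])
  have KC: "K \<subseteq> C" unfolding K_def using clC by auto
  have pK: "p \<in> K" unfolding K_def p_def by auto
  have clq: "cl C q = q"
  proof -
    have "is_closest C q q" using qC unfolding is_closest_def by auto
    thus ?thesis using clu[of q q] by auto
  qed
  have qK: "q \<in> K" unfolding K_def using clq by force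
  have comp: "connected_component C p q"
    unfolding connected_component_def using Kc KC pK qK by blast
  have Kball: "K - {q} \<subseteq> interior (cball x (dist x q))"
  proof
    fix c assume "c \<in> K - {q}"
    then obtain y where y: "y \<in> ?S" "c = cl C y" "c \<noteq> q" unfolding K_def by auto
    have e: "dist x q = dist x y + dist y q" using y(1) between[of x q y] between_mem_segment by auto
    have cl1: "dist y c \<le> dist y q" using clp[OF y(1)] qC y(2) unfolding is_closest_def by auto
    have tri: "dist x c \<le> dist x y + dist y c" by (rule dist_triangle)
    have "dist x c < dist x q"
    proof (rule ccontr)
      assume "\<not> ?thesis"
      hence "dist y c = dist y q" using e cl1 tri by linarith
      hence "is_closest C y q" using clp[OF y(1)] qC y(2) unfolding is_closest_def by auto
      hence "q = c" using clu[OF y(1)] y(2) by auto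
      thus False using y by auto
    qed
    thus "c \<in> interior (cball x (dist x q))" by (simp add: dist_commute)
  qed
  show ?thesis
    unfolding p_def[symmetric]
  proof (intro conjI allI impI)
    show "connected_component C p q" by (rule comp)
  next
    fix g assume g: "simple_loop g \<and> path_image g = connected_component_set C p"
    have "K \<subseteq> connected_component_set C p"
      by (rule connected_component_maximal[OF pK Kc KC])
    hence KG: "K \<subseteq> path_image g" using g by simp
    have "closed_arc g p q \<subseteq> K \<or> closed_arc g q p \<subseteq> K"
      using arc_in[OF _ KG Kc pK qK] g by blast
    thus "arc_co g p q \<subseteq> interior (cball x (dist x q)) \<or>
          arc_oc g q p \<subseteq> interior (cball x (dist x q))"
      unfolding arc_co_def arc_oc_def using Kball by blast
  qed
qed

end
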